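(* Let $r,s\in\mathbb{F}_2((x^{-1}))$ with $\deg(r)\ge0$ and $\deg(s)\ge0$. If $r\preccurlyeq_x s$, then $S(r)\preccurlyeq_x S(s)$. In particular, $\tau(r)\le\tau(s)$.
   Context: $\mathbb{F}_2((x^{-1}))$ is the field of formal series $\sum_{z\in\mathbb{Z}}a_zx^z$, $a_z\in\mathbb{F}_2$, with $a_z\ne0$ for only finitely many positive $z$; $\deg$ is the largest exponent with nonzero coefficient. The polynomial part is $[\sum a_zx^z]=\sum_{z\ge0}a_zx^z$. $S(r)=\frac{r}{x+1}$ if $[r](1)=0$ and $S(r)=\frac{xr}{x+1}$ if $[r](1)=1$. For $\deg(r)\ge0$, $\tau(r)$ is the least $k\in\mathbb{N}$ with $[S^k(r)]=1$. We write $r\preccurlyeq_x s$ if there exists an integer $n\ge0$ with $x^nr=s$. *)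

theory Defs
  imports "HOL-Library.Z2" "HOL-Computational_Algebra.Formal_Laurent_Series"
begin

text \<open>F_2((x^{-1})) is modelled as the Laurent series field bit fls in the
variable t = x^{-1}: the coefficient a_z of x^z is the coefficient of t^(-z).\<close>

type_synonym F2L = "bit fls"

definition xx :: F2L where "xx = fls_X_inv"

definition coeffx :: "F2L \<Rightarrow> int \<Rightarrow> bit" where
  "coeffx r z = fls_nth r (- z)"

text \<open>Degree in x: the largest z with a_z nonzero (meaningful for r nonzero).\<close>
definition degx :: "F2L \<Rightarrow> int" where
  "degx r = - fls_subdegree r"

definition polypart :: "F2L \<Rightarrow> bit poly" where
  "polypart r = (\<Sum>n\<le>nat (- fls_subdegree r). monom (coeffx r (int n)) n)"

definition S :: "F2L \<Rightarrow> F2L" where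
  "S r = (if poly (polypart r) 1 = 0 then r / (xx + 1) else (xx * r) / (xx + 1))"

definition tau :: "F2L \<Rightarrow> nat" where
  "tau r = (LEAST k. polypart ((S ^^ k) r) = 1)"

definition precx :: "F2L \<Rightarrow> F2L \<Rightarrow> bool" where
  "precx r s \<longleftrightarrow> (\<exists>n::nat. xx ^ n * r = s)"

end

theory Submission
  imports Defs
begin

unbundle fps_syntax
declare add_bit_eq_xor[simp del] mult_bit_eq_and[simp del]

abbreviation DD :: F2L where "DD \<equiv> xx + 1"

lemma bit_add_self: "(a::bit) + a = 0"
  by (cases a) simp_all

lemma DD_nz: "DD \<noteq> 0"
proof
  assume "DD = 0"
  then have "DD $$ (-1) = 0" by simp
  then show False by (simp add: xx_def)
qed

lemma DD_subdeg: "fls_subdegree DD = -1"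
  by (rule fls_subdegree_eqI) (auto simp: xx_def)

lemma X_xx: "fls_X * xx = 1"
  by (simp add: xx_def fls_X_times_conv_shift)

lemma L_eq: "poly (polypart r) 1 = (\<Sum>n\<le>nat (- fls_subdegree r). r $$ (- int n))"
  by (simp only: polypart_def poly_sum poly_monom coeffx_def power_one mult_1_right)

lemma coeff_polypart:
  "coeff (polypart r) i = (if i \<le> nat (- fls_subdegree r) then r $$ (- int i) else 0)"
  by (simp add: polypart_def coeff_sum coeffx_def coeff_monom)

lemma polypart_one: "polypart r = 1 \<longleftrightarrow> r \<noteq> 0 \<and> fls_subdegree r = 0"
proof
  assume h: "polypart r = 1"
  have c0: "r $$ 0 = 1" using arg_cong[OF h, of "\<lambda>p. coeff p 0"]
    by (simp add: coeff_polypart)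
  then have nz: "r \<noteq> 0" by auto
  have le: "fls_subdegree r \<le> 0" using c0 by (intro fls_subdegree_leI) simp
  show "r \<noteq> 0 \<and> fls_subdegree r = 0"
  proof (rule ccontr)
    assume "\<not> ?thesis"
    with nz le have lt: "fls_subdegree r < 0" by auto
    define i where "i = nat (- fls_subdegree r)"
    have "i > 0" using lt by (simp add: i_def)
    have "coeff (polypart r) i = r $$ fls_subdegree r"
      using lt by (simp add: coeff_polypart i_def)
    also have "\<dots> \<noteq> 0" using nz by simp
    finally show False using h \<open>i > 0\<close> by simp
  qed
next
  assume h: "r \<noteq> 0 \<and> fls_subdegree r = 0"
  then have "r $$ 0 = 1" using nth_fls_subdegree_nonzero[of r] by simp
  then show "polypart r = 1" using h
    by (intro poly_eqI) (simp add: coeff_polypart coeff_1)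
qed


lemma S_cases:
  "(S r = r / DD \<and> poly (polypart r) 1 = 0) \<or> (S r = xx * r / DD \<and> poly (polypart r) 1 = 1)"
  by (cases "poly (polypart r) 1") (auto simp: S_def)

lemma xx_nz: "xx \<noteq> 0" by (simp add: xx_def)

lemma xx_subdeg: "fls_subdegree xx = -1" by (simp add: xx_def)

lemma S_nz: "r \<noteq> 0 \<Longrightarrow> S r \<noteq> 0"
  using S_cases[of r] DD_nz xx_nz by auto

lemma S_deg_odd: "r \<noteq> 0 \<Longrightarrow> poly (polypart r) 1 = 1 \<Longrightarrow> fls_subdegree (S r) = fls_subdegree r"
  using DD_nz xx_nz by (simp add: S_def fls_divide_subdegree DD_subdeg xx_subdeg)

lemma S_deg_even: "r \<noteq> 0 \<Longrightarrow> poly (polypart r) 1 = 0 \<Longrightarrow> fls_subdegree (S r) = fls_subdegree r + 1"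
  using DD_nz by (simp add: S_def fls_divide_subdegree DD_subdeg)

lemma L_deg0: "r \<noteq> 0 \<Longrightarrow> fls_subdegree r = 0 \<Longrightarrow> poly (polypart r) 1 = 1"
  using nth_fls_subdegree_nonzero[of r] by (simp add: L_eq)

lemma S_inv: "r \<noteq> 0 \<Longrightarrow> fls_subdegree r \<le> 0 \<Longrightarrow>
   S r \<noteq> 0 \<and> fls_subdegree (S r) \<le> 0 \<and> fls_subdegree r \<le> fls_subdegree (S r)"
  using S_nz[of r] S_deg_odd[of r] S_deg_even[of r] L_deg0[of r]
  by (cases "poly (polypart r) 1") force+

lemma S_iter_inv: "r \<noteq> 0 \<Longrightarrow> fls_subdegree r \<le> 0 \<Longrightarrow>
   (S ^^ k) r \<noteq> 0 \<and> fls_subdegree ((S ^^ k) r) \<le> 0 \<and> fls_subdegree r \<le> fls_subdegree ((S ^^ k) r)"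
proof (induction k)
  case 0 then show ?case by simp
next
  case (Suc k)
  then show ?case using S_inv[of "(S ^^ k) r"] by auto
qed

lemma precx_S: "precx r s \<Longrightarrow> precx (S r) (S s)"
proof -
  assume "precx r s"
  then obtain n where s: "s = xx ^ n * r" unfolding precx_def by auto
  show ?thesis
  proof (cases n)
    case 0 then show ?thesis using s by (auto simp: precx_def intro: exI[of _ 0])
  next
    case (Suc m)
    consider "S r = r / DD" "S s = s / DD" | "S r = r / DD" "S s = xx * s / DD"
      | "S r = xx * r / DD" "S s = s / DD" | "S r = xx * r / DD" "S s = xx * s / DD"
      using S_cases[of r] S_cases[of s] by blast
    then show ?thesis
    proof cases
      case 1 then show ?thesis unfolding precx_def using s
        by (intro exI[of _ n]) simp
    next
      case 2 then show ?thesis unfolding precx_def using s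
        by (intro exI[of _ "Suc n"]) (simp add: mult_ac)
    next
      case 3 then show ?thesis unfolding precx_def using s Suc
        by (intro exI[of _ m]) (simp add: mult_ac)
    next
      case 4 then show ?thesis unfolding precx_def using s
        by (intro exI[of _ n]) (simp add: mult_ac)
    qed
  qed
qed

lemma precx_iter: "precx r s \<Longrightarrow> precx ((S ^^ k) r) ((S ^^ k) s)"
  by (induction k) (auto intro: precx_S)


lemma onepX_nth: "((1 + fls_X) * (g::F2L)) $$ m = g $$ m + g $$ (m - 1)"
proof -
  have "(1 + fls_X) * g = g + fls_shift (-1) g"
    by (simp add: distrib_right fls_X_times_conv_shift)
  then show ?thesis by simp
qed

lemma bit_add_self2: "(a::bit) + (a + c) = c"
  by (cases a) simp_all

lemma tele: "(1 + fls_X) * (g::F2L) = t \<Longrightarrow>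
  (\<Sum>n\<le>N. t $$ (- int n)) = g $$ 0 + g $$ (- int (Suc N))"
proof (induction N)
  case 0 then show ?case using onepX_nth[of g 0] by simp
next
  case (Suc N)
  have "(\<Sum>n\<le>Suc N. t $$ (- int n)) = g $$ 0 + g $$ (- int (Suc N)) + t $$ (- int (Suc N))"
    using Suc by simp
  also have "t $$ (- int (Suc N)) = g $$ (- int (Suc N)) + g $$ (- int (Suc (Suc N)))"
    using Suc.prems onepX_nth[of g "- int (Suc N)"] by (simp add: algebra_simps)
  finally show ?case by (simp add: add.assoc bit_add_self2)
qed

lemma odd_step_rel: "(1 + fls_X) * (xx * r / DD) = r"
proof -
  have "(1 + fls_X) * xx = DD" by (simp add: distrib_right X_xx add.commute)
  then have "(1 + fls_X) * (xx * r / DD) = DD * r / DD" by (simp add: mult.assoc[symmetric])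
  also have "\<dots> = r" using DD_nz by simp
  finally show ?thesis .
qed

lemma no_stuck:
  assumes t: "t \<noteq> 0" "fls_subdegree t = - int d" "d \<ge> 1"
    and all: "\<And>k. fls_subdegree ((S ^^ k) t) = - int d"
  shows False
proof -
  define G where "G k = (S ^^ k) t" for k
  have nz: "G k \<noteq> 0" for k
    using S_iter_inv[of t k] t by (simp add: G_def)
  have sd: "fls_subdegree (G k) = - int d" for k using all by (simp add: G_def)
  have odd: "poly (polypart (G k)) 1 = 1" for k
  proof (rule ccontr)
    assume "poly (polypart (G k)) 1 \<noteq> 1"
    then have e: "poly (polypart (G k)) 1 = 0" by simp
    have "G (Suc k) = S (G k)" by (simp add: G_def)
    with S_deg_even[OF nz e] have "fls_subdegree (G (Suc k)) = - int d + 1"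
      using sd[of k] by simp
    then show False using sd[of "Suc k"] by simp
  qed
  have step: "G (Suc k) = xx * G k / DD" for k
    using odd[of k] by (simp add: G_def S_def)
  have rel: "(1 + fls_X) * G (Suc k) = G k" for k
    using step odd_step_rel by simp
  have c0: "G (Suc k) $$ 0 = 1" for k
  proof -
    have "poly (polypart (G k)) 1 = G (Suc k) $$ 0 + G (Suc k) $$ (- int (Suc d))"
      unfolding L_eq using tele[OF rel[of k], of "nat (- fls_subdegree (G k))"] sd[of k] by simp
    also have "G (Suc k) $$ (- int (Suc d)) = 0"
      using sd[of "Suc k"] by (intro fls_eq0_below_subdegree) simp
    finally show ?thesis using odd[of k] by simp
  qed
  define c where "c j k = G k $$ (- int j)" for j k
  have rec: "c (Suc j) (Suc k) = c j k + c j (Suc k)" for j k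
  proof -
    have "G k $$ (- int j) = ((1 + fls_X) * G (Suc k)) $$ (- int j)" using rel[of k] by simp
    also have "\<dots> = G (Suc k) $$ (- int j) + G (Suc k) $$ (- int j - 1)" by (rule onepX_nth)
    also have "- int j - 1 = - int (Suc j)" by simp
    finally have "c j k = c j (Suc k) + c (Suc j) (Suc k)" unfolding c_def .
    then show ?thesis by (simp add: add.assoc bit_add_self)
  qed
  have Q: "c (Suc j) (k + j + 2) = 0" for j k
  proof (induction j arbitrary: k)
    case 0
    have "c 1 (k + 2) = c 0 (Suc k) + c 0 (Suc (Suc k))"
      using rec[of 0 "Suc k"] by (simp add: numeral_2_eq_2)
    then show ?case using c0 by (simp add: c_def)
  next
    case (Suc j)
    have "c (Suc (Suc j)) (k + Suc j + 2) = c (Suc j) (k + j + 2) + c (Suc j) (Suc k + j + 2)"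
      using rec[of "Suc j" "k + j + 2"] by simp
    then show ?case using Suc.IH[of k] Suc.IH[of "Suc k"] by simp
  qed
  obtain j where dj: "d = Suc j" using t(3) by (cases d) auto
  have "c d (d + 1) = 0" using Q[of j 0] dj by simp
  moreover have "c d (d + 1) \<noteq> 0"
    using nth_fls_subdegree_nonzero[OF nz[of "d+1"]] sd[of "d+1"] by (simp add: c_def)
  ultimately show False by simp
qed


lemma terminates:
  "t \<noteq> 0 \<Longrightarrow> fls_subdegree t = - int d \<Longrightarrow> \<exists>k. (S ^^ k) t \<noteq> 0 \<and> fls_subdegree ((S ^^ k) t) = 0"
proof (induction d arbitrary: t rule: less_induct)
  case (less d)
  show ?case
  proof (cases "d = 0")
    case True then show ?thesis using less.prems by (intro exI[of _ 0]) simp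
  next
    case False
    show ?thesis
    proof (cases "\<forall>k. fls_subdegree ((S ^^ k) t) = - int d")
      case True
      then show ?thesis using no_stuck[of t d] less.prems False by auto
    next
      case False
      then obtain k where k: "fls_subdegree ((S ^^ k) t) \<noteq> - int d" by auto
      have inv: "(S ^^ k) t \<noteq> 0 \<and> fls_subdegree ((S ^^ k) t) \<le> 0 \<and> - int d \<le> fls_subdegree ((S ^^ k) t)"
        using S_iter_inv[of t k] less.prems by simp
      define d' where "d' = nat (- fls_subdegree ((S ^^ k) t))"
      have "d' < d" "fls_subdegree ((S ^^ k) t) = - int d'" using inv k by (auto simp: d'_def)
      from less.IH[OF this(1) _ this(2)] inv obtain k' where
        "(S ^^ k') ((S ^^ k) t) \<noteq> 0 \<and> fls_subdegree ((S ^^ k') ((S ^^ k) t)) = 0" by blast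
      then show ?thesis by (intro exI[of _ "k' + k"]) (simp add: funpow_add)
    qed
  qed
qed

theorem lemma2p4:
  fixes r s :: F2L
  assumes "r \<noteq> 0" and "s \<noteq> 0"
    and "degx r \<ge> 0" and "degx s \<ge> 0"
    and "precx r s"
  shows "precx (S r) (S s) \<and> tau r \<le> tau s"
proof
  show "precx (S r) (S s)" using precx_S[OF assms(5)] .
  have tau_eq: "tau q = (LEAST k. (S ^^ k) q \<noteq> 0 \<and> fls_subdegree ((S ^^ k) q) = 0)" for q
    by (simp add: tau_def polypart_one)
  have sr: "fls_subdegree r \<le> 0" "fls_subdegree s \<le> 0" using assms(3,4) by (auto simp: degx_def)
  obtain k0 where "(S ^^ k0) s \<noteq> 0 \<and> fls_subdegree ((S ^^ k0) s) = 0"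
    using terminates[of s "nat (- fls_subdegree s)"] assms(2) sr by auto
  then have ks: "(S ^^ tau s) s \<noteq> 0 \<and> fls_subdegree ((S ^^ tau s) s) = 0"
    unfolding tau_eq by (rule LeastI)
  define k where "k = tau s"
  obtain m where m: "xx ^ m * (S ^^ k) r = (S ^^ k) s"
    using precx_iter[OF assms(5), of k] by (auto simp: precx_def)
  have ir: "(S ^^ k) r \<noteq> 0" "fls_subdegree ((S ^^ k) r) \<le> 0"
    using S_iter_inv[of r k] assms(1) sr by auto
  have "fls_subdegree ((S ^^ k) s) = fls_subdegree ((S ^^ k) r) - int m"
    using m[symmetric] ir(1) by (simp add: xx_def)
  then have "fls_subdegree ((S ^^ k) r) = 0" using ks ir(2) by (simp add: k_def)
  then have "tau r \<le> k" unfolding tau_eq using ir(1) by (intro Least_le) simp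
  then show "tau r \<le> tau s" by (simp add: k_def)
qed

end
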